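(* Let $F$ be a uniform dill map on $A^{\mathbb N}$ and $m\in\mathbb N$. Consider $F$ and $G=\sigma^m\circ F$ as maps on $A^{\mathbb N}$ equipped with the Besicovitch pseudo-metric $\mathfrak d_H$. Then: (1) if $F$ is sensitive, then $G$ is sensitive; (2) if $x$ is an equicontinuous point of $F$, then $x$ is an equicontinuous point of $G$; (3) if $F$ is equicontinuous, then $G$ is equicontinuous.
   Context: $A$ is a finite alphabet, $\sigma$ the shift $\sigma(x)_i=x_{i+1}$ on $A^{\mathbb N}$, $x_{[i,j)}=x_i\cdots x_{j-1}$. A dill map with diameter $\delta\ge1$ and local rule $f:A^\delta\to A^+$ is $F(x)=f(x_{[0,\delta)})f(x_{[1,\delta+1)})\cdots$; it is uniform if all words $f(u)$, $u\in A^\delta$, have the same length. For equal-length words $d_H(u,v)$ is the number of differing positions, and $\mathfrak d_H(x,y)=\limsup_{l\to\infty}d_H(x_{[0,l)},y_{[0,l)})/l$. For a map $H$ and pseudo-metric $d=\mathfrak d_H$: $x$ is an equicontinuous point of $H$ if $\forall\varepsilon>0\ \exists\eta>0\ \forall y,\ d(x,y)<\eta\Rightarrow\forall t\in\mathbb N,\ d(H^t(x),H^t(y))<\varepsilon$; $H$ is equicontinuous if $\forall\varepsilon>0\ \exists\eta>0\ \forall x,y,\ d(x,y)<\eta\Rightarrow\forall t,\ d(H^t(x),H^t(y))<\varepsilon$; $H$ is sensitive if $\exists\varepsilon>0\ \forall x\ \forall\eta>0\ \exists y,\ d(x,y)<\eta$ and $\exists t\in\mathbb N,\ d(H^t(x),H^t(y))>\varepsilon$.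 *)

theory Defs
  imports "HOL-Analysis.Analysis" "HOL-Library.Liminf_Limsup"
begin

definition shift :: "(nat \<Rightarrow> 'a) \<Rightarrow> (nat \<Rightarrow> 'a)" where
  "shift x = (\<lambda>i. x (Suc i))"

text \<open>Infinite concatenation w 0 w 1 w 2 ... of (nonempty) finite words.\<close>
definition iconcat :: "(nat \<Rightarrow> 'a list) \<Rightarrow> nat \<Rightarrow> 'a" where
  "iconcat w n =
     (let S = (\<lambda>k. \<Sum>j<k. length (w j));
          k = (LEAST k. n < S (Suc k))
      in w k ! (n - S k))"

definition factor :: "(nat \<Rightarrow> 'a) \<Rightarrow> nat \<Rightarrow> nat \<Rightarrow> 'a list" where
  "factor x i j = map x [i..<j]"

definition dill_rule :: "('a list \<Rightarrow> 'a list) \<Rightarrow> nat \<Rightarrow> bool" where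
  "dill_rule f \<delta> \<longleftrightarrow> \<delta> \<ge> 1 \<and> (\<forall>u. length u = \<delta> \<longrightarrow> f u \<noteq> [])"

definition uniform_dill_rule :: "('a list \<Rightarrow> 'a list) \<Rightarrow> nat \<Rightarrow> bool" where
  "uniform_dill_rule f \<delta> \<longleftrightarrow> dill_rule f \<delta> \<and>
     (\<exists>l. \<forall>u. length u = \<delta> \<longrightarrow> length (f u) = l)"

definition dill_map :: "('a list \<Rightarrow> 'a list) \<Rightarrow> nat \<Rightarrow> (nat \<Rightarrow> 'a) \<Rightarrow> (nat \<Rightarrow> 'a)" where
  "dill_map f \<delta> x = iconcat (\<lambda>i. f (factor x i (i + \<delta>)))"

definition hamming_prefix :: "(nat \<Rightarrow> 'a) \<Rightarrow> (nat \<Rightarrow> 'a) \<Rightarrow> nat \<Rightarrow> nat" where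
  "hamming_prefix x y l = card {i. i < l \<and> x i \<noteq> y i}"

definition besicovitch :: "(nat \<Rightarrow> 'a) \<Rightarrow> (nat \<Rightarrow> 'a) \<Rightarrow> real" where
  "besicovitch x y =
     real_of_ereal (limsup (\<lambda>l. ereal (real (hamming_prefix x y l) / real l)))"

definition equicontinuous_point :: "('b \<Rightarrow> 'b \<Rightarrow> real) \<Rightarrow> ('b \<Rightarrow> 'b) \<Rightarrow> 'b \<Rightarrow> bool" where
  "equicontinuous_point d H x \<longleftrightarrow>
     (\<forall>\<epsilon>>0. \<exists>\<eta>>0. \<forall>y. d x y < \<eta> \<longrightarrow> (\<forall>t. d ((H ^^ t) x) ((H ^^ t) y) < \<epsilon>))"

definition equicontinuous :: "('b \<Rightarrow> 'b \<Rightarrow> real) \<Rightarrow> ('b \<Rightarrow> 'b) \<Rightarrow> bool" where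
  "equicontinuous d H \<longleftrightarrow>
     (\<forall>\<epsilon>>0. \<exists>\<eta>>0. \<forall>x y. d x y < \<eta> \<longrightarrow> (\<forall>t. d ((H ^^ t) x) ((H ^^ t) y) < \<epsilon>))"

definition sensitive :: "('b \<Rightarrow> 'b \<Rightarrow> real) \<Rightarrow> ('b \<Rightarrow> 'b) \<Rightarrow> bool" where
  "sensitive d H \<longleftrightarrow>
     (\<exists>\<epsilon>>0. \<forall>x. \<forall>\<eta>>0. \<exists>y. d x y < \<eta> \<and> (\<exists>t. d ((H ^^ t) x) ((H ^^ t) y) > \<epsilon>))"

end

theory Submission
  imports Defs
begin

lemma shift_pow: "(shift ^^ k) x = (\<lambda>i. x (i + k))"
  by (induction k arbitrary: x) (auto simp: shift_def funpow_Suc_right)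

lemma iconcat_uniform:
  assumes "\<And>i. length (w i) = L" "L > 0"
  shows "iconcat w n = w (n div L) ! (n mod L)"
proof -
  have S: "(\<Sum>j<k. length (w j)) = k * L" for k using assms(1) by simp
  have "(LEAST k. n < Suc k * L) = n div L"
  proof (rule Least_equality)
    show "n < Suc (n div L) * L"
      using assms(2) by (metis dividend_less_div_times mult.commute times_div_less_eq_dividend
          Suc_eq_plus1 add_mult_distrib mult_1 div_mult_mod_eq mod_less_divisor add_less_mono1 add.commute)
  next
    fix y assume "n < Suc y * L"
    then show "n div L \<le> y"
      by (metis less_Suc_eq_le less_mult_imp_div_less)
  qed
  moreover have "n - n div L * L = n mod L" by (simp add: minus_div_mult_eq_mod)
  ultimately show ?thesis unfolding iconcat_def Let_def S by simp
qed

lemma dill_shift: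
  assumes "uniform_dill_rule f \<delta>"
  obtains L where "L > 0" "\<And>x k. dill_map f \<delta> ((shift ^^ k) x) = (shift ^^ (L * k)) (dill_map f \<delta> x)"
proof -
  obtain L where L: "\<And>u. length u = \<delta> \<Longrightarrow> length (f u) = L" and d: "\<delta> \<ge> 1"
    and ne: "\<And>u. length u = \<delta> \<Longrightarrow> f u \<noteq> []"
    using assms unfolding uniform_dill_rule_def dill_rule_def by blast
  have "length (f (replicate \<delta> undefined)) = L" by (rule L) simp
  moreover have "f (replicate \<delta> undefined) \<noteq> []" by (rule ne) simp
  ultimately have Lpos: "L > 0" by auto
  have lenw: "length (f (factor x i (i + \<delta>))) = L" for x i by (rule L) (simp add: factor_def)
  have F: "dill_map f \<delta> x n = f (factor x (n div L) (n div L + \<delta>)) ! (n mod L)" for x n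
    unfolding dill_map_def by (rule iconcat_uniform[OF lenw Lpos])
  have fac: "factor ((shift ^^ k) x) i j = factor x (i + k) (j + k)" for x k i j
    unfolding factor_def shift_pow by (simp add: list_eq_iff_nth_eq add.commute add.left_commute)
  have "dill_map f \<delta> ((shift ^^ k) x) = (shift ^^ (L * k)) (dill_map f \<delta> x)" for x k
  proof
    fix n
    have "(n + L * k) div L = n div L + k" "(n + L * k) mod L = n mod L" using Lpos by auto
    then show "dill_map f \<delta> ((shift ^^ k) x) n = (shift ^^ (L * k)) (dill_map f \<delta> x) n"
      unfolding F fac unfolding shift_pow F by (simp add: algebra_simps)
  qed
  then show ?thesis using that Lpos by blast
qed

lemma hamming_sum: "hamming_prefix x y l = (\<Sum>i<l. if x i \<noteq> y i then 1 else 0)"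
proof -
  have "{i. i < l \<and> x i \<noteq> y i} = {i\<in>{..<l}. x i \<noteq> y i}" by auto
  then show ?thesis unfolding hamming_prefix_def
    by (simp add: sum.inter_filter[symmetric])
qed

lemma hamming_le: "hamming_prefix x y l \<le> l"
  unfolding hamming_sum by (rule order_trans[OF sum_mono[of _ _ "\<lambda>_. 1"]]) auto

lemma hamming_Suc:
  "hamming_prefix x y (Suc l) = (if x 0 \<noteq> y 0 then 1 else 0) + hamming_prefix (shift x) (shift y) l"
  unfolding hamming_sum shift_def by (subst sum.lessThan_Suc_shift) simp

lemma abs_aux: fixes h c l :: real assumes "0 \<le> h" "h \<le> l" "l * c \<le> l" "0 \<le> l * c"
  shows "\<bar>h - l * c\<bar> \<le> l" using assms by linarith

lemma besicovitch_shift: "besicovitch (shift x) (shift y) = besicovitch x y"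
proof -
  define a where "a l = real (hamming_prefix (shift x) (shift y) l) / real l" for l
  define b where "b l = real (hamming_prefix x y l) / real l" for l
  define c :: real where "c = (if x 0 \<noteq> y 0 then 1 else 0)"
  have bound: "\<bar>a l - b (Suc l)\<bar> \<le> 1 / real (Suc l)" for l
  proof (cases "l = 0")
    case True then show ?thesis by (simp add: a_def b_def hamming_Suc hamming_sum)
  next
    case False
    define h where "h = real (hamming_prefix (shift x) (shift y) l)"
    have hl: "0 \<le> h" "h \<le> real l" using hamming_le[of "shift x" "shift y" l] by (auto simp: h_def)
    have c01: "0 \<le> c" "c \<le> 1" by (auto simp: c_def)
    have bS: "b (Suc l) = (c + h) / (real l + 1)" by (simp add: b_def hamming_Suc h_def c_def)
    have aa: "a l = h / real l" by (simp add: a_def h_def)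
    have lp: "real l > 0" using False by simp
    have "a l - b (Suc l) = (h - real l * c) / (real l * (real l + 1))"
      unfolding aa bS using lp by (simp add: field_simps)
    have absle: "\<bar>h - real l * c\<bar> \<le> real l"
      by (rule abs_aux[OF hl mult_left_le[OF c01(2)]]) (use c01 in simp_all)
    have dnn: "0 \<le> real l * (real l + 1)" using lp by simp
    note eq = \<open>a l - b (Suc l) = (h - real l * c) / (real l * (real l + 1))\<close>
    have "\<bar>a l - b (Suc l)\<bar> = \<bar>h - real l * c\<bar> / (real l * (real l + 1))"
      unfolding eq using lp by (simp only: abs_divide abs_of_pos mult_pos_pos add_pos_pos zero_less_one)
    also have "\<dots> \<le> real l / (real l * (real l + 1))"
      by (rule divide_right_mono[OF absle dnn])
    also have "\<dots> = 1 / (real l + 1)" using lp by (simp only: nonzero_divide_mult_cancel_left less_irrefl)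
    also have "\<dots> = 1 / real (Suc l)" by simp
    finally show ?thesis .
  qed
  have lim0: "(\<lambda>l. a l - b (Suc l)) \<longlonglongrightarrow> 0"
  proof (rule Lim_null_comparison[where g = "\<lambda>l. 1 / real (Suc l)"])
    show "\<forall>\<^sub>F l in sequentially. norm (a l - b (Suc l)) \<le> 1 / real (Suc l)"
      using bound by simp
    show "(\<lambda>l. 1 / real (Suc l)) \<longlonglongrightarrow> 0"
      using LIMSEQ_inverse_real_of_nat by (simp add: inverse_eq_divide)
  qed
  hence lim0': "(\<lambda>l. ereal (a l - b (Suc l))) \<longlonglongrightarrow> ereal 0"
    by (rule tendsto_ereal)
  have "limsup (\<lambda>l. ereal (a l)) = limsup (\<lambda>l. ereal (a l - b (Suc l)) + ereal (b (Suc l)))"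
    by simp
  also have "\<dots> = ereal 0 + limsup (\<lambda>l. ereal (b (Suc l)))"
    by (rule ereal_limsup_lim_add[OF lim0']) simp
  also have "\<dots> = limsup (\<lambda>l. ereal (b l))"
    using limsup_shift[of "\<lambda>l. ereal (b l)"] by simp
  finally show ?thesis unfolding besicovitch_def a_def b_def by simp
qed

lemma besicovitch_shift_pow: "besicovitch ((shift ^^ k) x) ((shift ^^ k) y) = besicovitch x y"
  by (induction k) (simp_all add: besicovitch_shift)

lemma G_iter:
  assumes "uniform_dill_rule f \<delta>"
  shows "\<exists>k. \<forall>x. (((shift ^^ m) \<circ> dill_map f \<delta>) ^^ t) x = (shift ^^ k) ((dill_map f \<delta> ^^ t) x)"
proof -
  obtain L where L: "\<And>x k. dill_map f \<delta> ((shift ^^ k) x) = (shift ^^ (L * k)) (dill_map f \<delta> x)"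
    using dill_shift[OF assms] by blast
  show ?thesis
  proof (induction t)
    case 0 then show ?case by (rule exI[of _ 0]) simp
  next
    case (Suc t)
    then obtain k where k: "\<And>x. (((shift ^^ m) \<circ> dill_map f \<delta>) ^^ t) x = (shift ^^ k) ((dill_map f \<delta> ^^ t) x)"
      by blast
    show ?case
    proof (rule exI[of _ "m + L * k"], rule allI)
      fix x
      have "(((shift ^^ m) \<circ> dill_map f \<delta>) ^^ Suc t) x
          = (shift ^^ m) (dill_map f \<delta> ((((shift ^^ m) \<circ> dill_map f \<delta>) ^^ t) x))"
        by simp
      also have "\<dots> = (shift ^^ m) (dill_map f \<delta> ((shift ^^ k) ((dill_map f \<delta> ^^ t) x)))"
        by (simp only: k)
      also have "\<dots> = (shift ^^ m) ((shift ^^ (L * k)) (dill_map f \<delta> ((dill_map f \<delta> ^^ t) x)))"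
        by (simp only: L)
      also have "\<dots> = (shift ^^ (m + L * k)) ((dill_map f \<delta> ^^ Suc t) x)"
        by (simp only: funpow_add comp_apply funpow.simps(2))
      finally show "(((shift ^^ m) \<circ> dill_map f \<delta>) ^^ Suc t) x = (shift ^^ (m + L * k)) ((dill_map f \<delta> ^^ Suc t) x)" .
    qed
  qed
qed

lemma G_dist:
  assumes "uniform_dill_rule f \<delta>"
  shows "besicovitch ((((shift ^^ m) \<circ> dill_map f \<delta>) ^^ t) x) ((((shift ^^ m) \<circ> dill_map f \<delta>) ^^ t) y)
       = besicovitch ((dill_map f \<delta> ^^ t) x) ((dill_map f \<delta> ^^ t) y)"
proof -
  obtain k where "\<And>x. (((shift ^^ m) \<circ> dill_map f \<delta>) ^^ t) x = (shift ^^ k) ((dill_map f \<delta> ^^ t) x)"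
    using G_iter[OF assms, where m=m and t=t] by blast
  then show ?thesis by (simp add: besicovitch_shift_pow)
qed

theorem mainTheorem5:
  fixes f :: "'a::finite list \<Rightarrow> 'a list" and \<delta> m :: nat
  assumes "uniform_dill_rule f \<delta>"
  shows "(sensitive besicovitch (dill_map f \<delta>) \<longrightarrow>
            sensitive besicovitch ((shift ^^ m) \<circ> dill_map f \<delta>))
       \<and> (\<forall>x. equicontinuous_point besicovitch (dill_map f \<delta>) x \<longrightarrow>
            equicontinuous_point besicovitch ((shift ^^ m) \<circ> dill_map f \<delta>) x)
       \<and> (equicontinuous besicovitch (dill_map f \<delta>) \<longrightarrow>
            equicontinuous besicovitch ((shift ^^ m) \<circ> dill_map f \<delta>))"
  unfolding sensitive_def equicontinuous_point_def equicontinuous_def G_dist[OF assms]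
  by blast

end
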